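(* Let $a\in\mathbb{R}$, $T>0$ and let $\mathcal{G}_{\mathrm{adv}}$ and $\mu$ be as in the context. Let $M>0$. There exists a constant $C>0$, depending only on $M$ and $\mu$ (in particular independent of $m$ and $p$), such that for any $m,p\in\mathbb{N}$, any choice of sensor points $x_1,\dots,x_m\in\mathbb{T}$, any measurable branch map $\boldsymbol\beta:\mathbb{R}^m\to\mathbb{R}^p$ and any trunk functions $\tau_1,\dots,\tau_p\in L^2(\mathbb{T})$, the DeepONet $\mathcal{N}^{\mathrm{DON}}(\bar u)(y)=\sum_{k=1}^p\beta_k(\bar u(x_1),\dots,\bar u(x_m))\tau_k(y)$ satisfying $\sup_{\bar u\in\operatorname{supp}\mu}\|\mathcal{N}^{\mathrm{DON}}(\bar u)\|_{L^\infty}\le M$ obeys \[ \mathbb{E}_{\bar u\sim\mu}\big[\|\mathcal{G}_{\mathrm{adv}}(\bar u)-\mathcal{N}^{\mathrm{DON}}(\bar u)\|_{L^1(\mathbb{T})}\big]\ \ge\ \frac{C}{\min(m,p)}. \]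
   Context: $\mathbb{T}=\mathbb{R}/2\pi\mathbb{Z}$ (identified with $[0,2\pi)$), with Lebesgue measure. Fix constants $0<\underline h\le\overline h$ and $0<\underline w\le\overline w<2\pi$. The input measure $\mu$ is the law of the random function $\bar u(x)=h\,1_{[-w/2,w/2]}(x-\xi)$ (understood $2\pi$-periodically on $\mathbb{T}$), where $h\sim\mathrm{Unif}[\underline h,\overline h]$, $w\sim\mathrm{Unif}[\underline w,\overline w]$, $\xi\sim\mathrm{Unif}[0,2\pi]$ are independent. For fixed speed $a\in\mathbb{R}$ and time $T>0$, $\mathcal{G}_{\mathrm{adv}}$ is the solution operator at time $T$ of the linear advection equation $\partial_tu+a\partial_xu=0$ on $\mathbb{T}$, i.e. $\mathcal{G}_{\mathrm{adv}}(\bar u)(x)=\bar u(x-aT)$. *)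

theory Defs
  imports "HOL-Probability.Probability"
begin

text \<open>The torus T = R/2piZ is represented by 2pi-periodic real functions;
  integrals over T are integrals over the fundamental domain [0,2pi).\<close>

definition box_fun :: "real \<Rightarrow> real \<Rightarrow> real \<Rightarrow> real \<Rightarrow> real" where
  "box_fun h w \<xi> x = (if \<exists>k::int. \<bar>x - \<xi> - 2 * pi * real_of_int k\<bar> \<le> w / 2 then h else 0)"

definition G_adv :: "real \<Rightarrow> real \<Rightarrow> (real \<Rightarrow> real) \<Rightarrow> (real \<Rightarrow> real)" where
  "G_adv a T u = (\<lambda>x. u (x - a * T))"

definition unif_real :: "real \<Rightarrow> real \<Rightarrow> real measure" where
  "unif_real lo hi = (if lo < hi then uniform_measure lborel {lo..hi} else return lborel lo)"

text \<open>Law of the parameters (h, (w, xi)); mu is its push-forward under box_fun.\<close>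
definition param_law :: "real \<Rightarrow> real \<Rightarrow> real \<Rightarrow> real \<Rightarrow> (real \<times> real \<times> real) measure" where
  "param_law hl hu wl wu = unif_real hl hu \<Otimes>\<^sub>M (unif_real wl wu \<Otimes>\<^sub>M unif_real 0 (2 * pi))"

text \<open>DeepONet with sensors x_0..x_{m-1}, branch components beta_k (functions on R^m,
  represented as extensional functions on {..<m}) and trunk functions tau_k, k < p.\<close>
definition deeponet :: "nat \<Rightarrow> nat \<Rightarrow> (nat \<Rightarrow> real) \<Rightarrow> (nat \<Rightarrow> (nat \<Rightarrow> real) \<Rightarrow> real)
     \<Rightarrow> (nat \<Rightarrow> real \<Rightarrow> real) \<Rightarrow> (real \<Rightarrow> real) \<Rightarrow> real \<Rightarrow> real" where
  "deeponet m p x \<beta> \<tau> u y = (\<Sum>k<p. \<beta> k (\<lambda>i\<in>{..<m}. u (x i)) * \<tau> k y)"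

definition L1_dist_T :: "(real \<Rightarrow> real) \<Rightarrow> (real \<Rightarrow> real) \<Rightarrow> ennreal" where
  "L1_dist_T f g = (\<integral>\<^sup>+ y. ennreal (indicator {0..<2 * pi} y * \<bar>f y - g y\<bar>) \<partial>lborel)"

end

theory Submission
  imports Defs
begin

lemma box_window:
  fixes y t w L :: real
  assumes "w + L < 2*pi" "-w/2 - L \<le> y - t" "y - t < 2*pi - w/2" "0 \<le> L"
  shows "(\<exists>k::int. \<bar>y - t - 2*pi*k\<bar> \<le> w/2) \<longleftrightarrow> \<bar>y - t\<bar> \<le> w/2"
proof
  assume "\<exists>k::int. \<bar>y - t - 2*pi*k\<bar> \<le> w/2"
  then obtain k::int where k: "\<bar>y - t - 2*pi*k\<bar> \<le> w/2" by blast
  have "k = 0"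
  proof (rule ccontr)
    assume "k \<noteq> 0"
    then consider "k \<ge> 1" | "k \<le> -1" by linarith
    then show False
    proof cases
      case 1
      then have "2*pi*k \<ge> 2*pi*1" using pi_gt_zero by (intro mult_left_mono) auto
      then show False using k assms by linarith
    next
      case 2
      then have "2*pi*k \<le> 2*pi*(-1)" using pi_gt_zero by (intro mult_left_mono) auto
      then show False using k assms by linarith
    qed
  qed
  then show "\<bar>y - t\<bar> \<le> w/2" using k by simp
next
  assume "\<bar>y - t\<bar> \<le> w/2"
  then show "\<exists>k::int. \<bar>y - t - 2*pi*k\<bar> \<le> w/2" by (intro exI[of _ 0]) simp
qed

lemma in_out_in:
  fixes z w t1 t2 t3 :: real
  assumes "t1 \<le> t2" "t2 \<le> t3" "t3 - t1 < 2*pi - w"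
    and "\<exists>k::int. \<bar>z - t1 - 2*pi*k\<bar> \<le> w/2" "\<exists>k::int. \<bar>z - t3 - 2*pi*k\<bar> \<le> w/2"
  shows "\<exists>k::int. \<bar>z - t2 - 2*pi*k\<bar> \<le> w/2"
proof -
  obtain k1::int where k1: "\<bar>z - t1 - 2*pi*k1\<bar> \<le> w/2" using assms by blast
  obtain k3::int where k3: "\<bar>z - t3 - 2*pi*k3\<bar> \<le> w/2" using assms by blast
  have "k1 = k3"
  proof (rule ccontr)
    assume "k1 \<noteq> k3"
    then consider "k3 \<ge> k1 + 1" | "k1 \<ge> k3 + 1" by linarith
    then show False
    proof cases
      case 1
      then have "2*pi*(real_of_int k1 + 1) \<le> 2*pi*k3"
        using pi_gt_zero by (intro mult_left_mono) auto
      then have "2*pi*k1 + 2*pi \<le> 2*pi*k3" by (simp add: algebra_simps)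
      then show False using k1 k3 assms by (auto simp: abs_if split: if_splits)
    next
      case 2
      then have "2*pi*(real_of_int k3 + 1) \<le> 2*pi*k1"
        using pi_gt_zero by (intro mult_left_mono) auto
      then have "2*pi*k3 + 2*pi \<le> 2*pi*k1" by (simp add: algebra_simps)
      then show False using k1 k3 assms by (auto simp: abs_if split: if_splits)
    qed
  qed
  then show ?thesis using k1 k3 assms(1,2) by (intro exI[of _ k1]) (auto simp: abs_if split: if_splits)
qed

lemma out_in_out:
  fixes z w t1 t2 t3 :: real
  assumes "t1 \<le> t2" "t2 \<le> t3" "t3 - t1 < w"
    and "\<not>(\<exists>k::int. \<bar>z - t1 - 2*pi*k\<bar> \<le> w/2)" "\<exists>k::int. \<bar>z - t2 - 2*pi*k\<bar> \<le> w/2"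
    "\<not>(\<exists>k::int. \<bar>z - t3 - 2*pi*k\<bar> \<le> w/2)"
  shows False
proof -
  obtain k::int where k: "\<bar>z - t2 - 2*pi*k\<bar> \<le> w/2" using assms by blast
  have a: "\<bar>z - t1 - 2*pi*k\<bar> > w/2" "\<bar>z - t3 - 2*pi*k\<bar> > w/2" using assms(4,6) not_le by blast+
  show False using a k assms(1-3) by (auto simp: abs_if split: if_splits)
qed

lemma change_count:
  fixes z w t0 \<delta> :: real and n :: nat
  assumes "0 < \<delta>" "real n * \<delta> < w" "real n * \<delta> < 2*pi - w"
  shows "card {j. j < n \<and> (\<exists>k::int. \<bar>z - (t0 + real j * \<delta>) - 2*pi*k\<bar> \<le> w/2)
                    \<noteq> (\<exists>k::int. \<bar>z - (t0 + real (Suc j) * \<delta>) - 2*pi*k\<bar> \<le> w/2)} \<le> 1"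
proof -
  define mem where "mem t = (\<exists>k::int. \<bar>z - t - 2*pi*k\<bar> \<le> w/2)" for t
  define t where "t j = t0 + real j * \<delta>" for j :: nat
  have tm: "t i \<le> t j" if "i \<le> j" for i j
    using that assms(1) unfolding t_def by (simp add: mult_right_mono)
  have td: "t j - t i \<le> real n * \<delta>" if "i \<le> j" "j \<le> n" for i j
  proof -
    have "t j - t i = (real j - real i) * \<delta>" unfolding t_def by (simp add: algebra_simps)
    also have "\<dots> \<le> real n * \<delta>" using that assms(1) by (intro mult_right_mono) auto
    finally show ?thesis .
  qed
  have key: "j = j'" if "j < n" "j' < n" "mem (t j) \<noteq> mem (t (Suc j))" "mem (t j') \<noteq> mem (t (Suc j'))" "j \<le> j'" for j j'
  proof (rule ccontr)
    assume "j \<noteq> j'"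
    then have jj: "Suc j \<le> j'" using that by simp
    have ab: "t j \<le> t (Suc j)" "t (Suc j) \<le> t j'" "t j' \<le> t (Suc j')"
      using tm jj by auto
    have d1: "t (Suc j') - t j \<le> real n * \<delta>" using td that by auto
    have d2: "t j' - t j \<le> real n * \<delta>" using td that by auto
    have d3: "t (Suc j') - t (Suc j) \<le> real n * \<delta>" using td that jj by auto
    have ioi: "mem b" if "mem a" "mem c" "a \<le> b" "b \<le> c" "c - a \<le> real n * \<delta>" for a b c
      using in_out_in[of a b c w z] that assms unfolding mem_def by auto
    have oio: False if "\<not> mem a" "mem b" "\<not> mem c" "a \<le> b" "b \<le> c" "c - a \<le> real n * \<delta>" for a b c
      using out_in_out[of a b c w z] that assms unfolding mem_def by auto
    show False
    proof (cases "mem (t j)")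
      case True
      then have nb: "\<not> mem (t (Suc j))" using that by auto
      show ?thesis
      proof (cases "mem (t (Suc j'))")
        case True
        then show ?thesis using ioi[of "t j" "t (Suc j')" "t (Suc j)"] \<open>mem (t j)\<close> nb ab d1 by auto
      next
        case False
        then have "mem (t j')" using that by auto
        then show ?thesis using ioi[of "t j" "t j'" "t (Suc j)"] \<open>mem (t j)\<close> nb ab d2 by auto
      qed
    next
      case False
      then have nb: "mem (t (Suc j))" using that by auto
      show ?thesis
      proof (cases "mem (t (Suc j'))")
        case True
        then have "\<not> mem (t j')" using that by auto
        then show ?thesis using ioi[of "t (Suc j)" "t (Suc j')" "t j'"] True nb ab d3 by auto
      next
        case False
        then show ?thesis using oio[of "t j" "t (Suc j)" "t (Suc j')"] \<open>\<not> mem (t j)\<close> nb ab d1 by auto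
      qed
    qed
  qed
  have "card {j. j < n \<and> mem (t j) \<noteq> mem (t (Suc j))} \<le> Suc 0"
  proof (subst card_le_Suc0_iff_eq, simp, intro ballI)
    fix a b assume "a \<in> {j. j < n \<and> mem (t j) \<noteq> mem (t (Suc j))}" "b \<in> {j. j < n \<and> mem (t j) \<noteq> mem (t (Suc j))}"
    then show "a = b" using key[of a b] key[of b a] by (cases "a \<le> b") auto
  qed
  then show ?thesis unfolding mem_def t_def by simp
qed

lemma lin_dep:
  fixes v :: "'a \<Rightarrow> nat \<Rightarrow> real"
  assumes "finite S" "p < card S"
  shows "\<exists>c. (\<exists>j\<in>S. c j \<noteq> 0) \<and> (\<forall>k<p. (\<Sum>j\<in>S. c j * v j k) = 0)"
  using assms
proof (induction p arbitrary: S v)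
  case 0
  then obtain j where "j \<in> S" by fastforce
  then show ?case by (intro exI[of _ "\<lambda>_. 1"]) auto
next
  case (Suc p)
  show ?case
  proof (cases "\<forall>j\<in>S. v j p = 0")
    case True
    obtain c where c: "\<exists>j\<in>S. c j \<noteq> 0" "\<forall>k<p. (\<Sum>j\<in>S. c j * v j k) = 0"
      using Suc.IH[of S v] Suc.prems by auto
    have "(\<Sum>j\<in>S. c j * v j k) = 0" if "k < Suc p" for k
      using c True that by (cases "k = p") auto
    then show ?thesis using c by blast
  next
    case False
    then obtain j0 where j0: "j0 \<in> S" "v j0 p \<noteq> 0" by blast
    define S' where "S' = S - {j0}"
    define v' where "v' j k = v j k - (v j p / v j0 p) * v j0 k" for j k
    have "finite S'" "p < card S'" using Suc.prems j0 unfolding S'_def by auto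
    then obtain c' where c': "\<exists>j\<in>S'. c' j \<noteq> 0" "\<forall>k<p. (\<Sum>j\<in>S'. c' j * v' j k) = 0"
      using Suc.IH by blast
    define c where "c j = (if j = j0 then - (\<Sum>i\<in>S'. c' i * v i p) / v j0 p else c' j)" for j
    have sS: "(\<Sum>j\<in>S. f j) = f j0 + (\<Sum>j\<in>S'. f j)" for f :: "_ \<Rightarrow> real"
      unfolding S'_def using j0 Suc.prems(1) by (simp add: sum.remove)
    have "(\<Sum>j\<in>S. c j * v j k) = 0" if "k < Suc p" for k
    proof (cases "k = p")
      case True
      have "(\<Sum>j\<in>S'. c j * v j k) = (\<Sum>j\<in>S'. c' j * v j p)"
        using True by (intro sum.cong) (auto simp: c_def S'_def)
      then show ?thesis using j0 True by (simp add: sS c_def)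
    next
      case False
      then have kp: "k < p" using that by simp
      have "(\<Sum>j\<in>S'. c j * v j k) = (\<Sum>j\<in>S'. c' j * v' j k + (c' j * v j p / v j0 p) * v j0 k)"
        by (intro sum.cong) (auto simp: c_def S'_def v'_def algebra_simps)
      also have "\<dots> = (\<Sum>j\<in>S'. c' j * v' j k) + (\<Sum>j\<in>S'. c' j * v j p) / v j0 p * v j0 k"
        by (simp add: sum.distrib sum_distrib_right sum_divide_distrib)
      also have "\<dots> = (\<Sum>j\<in>S'. c' j * v j p) / v j0 p * v j0 k" using c' kp by simp
      finally show ?thesis using j0 by (simp add: sS c_def)
    qed
    moreover have "\<exists>j\<in>S. c j \<noteq> 0" using c' unfolding c_def S'_def by auto
    ultimately show ?thesis by blast
  qed
qed



lemma box_meas[measurable]: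
  "(\<lambda>z. box_fun (fh z) (fw z) (fxi z) (fy z)) \<in> borel_measurable N"
  if [measurable]: "fh \<in> borel_measurable N" "fw \<in> borel_measurable N" "fxi \<in> borel_measurable N" "fy \<in> borel_measurable N"
  unfolding box_fun_def by measurable

lemma core:
  fixes h w L s \<xi>0 :: real and q m p :: nat and x :: "nat \<Rightarrow> real"
    and \<beta> :: "nat \<Rightarrow> (nat \<Rightarrow> real) \<Rightarrow> real" and \<tau> :: "nat \<Rightarrow> real \<Rightarrow> real"
  assumes h: "0 < h" and L: "0 < L" "L < w" "w + L < 2*pi"
    and q: "1 \<le> q" "q = min m p"
    and win: "0 \<le> \<xi>0 + s - w/2" "\<xi>0 + s - w/2 + L \<le> 2*pi"
    and \<tau>m: "\<And>k. k<p \<Longrightarrow> \<tau> k \<in> borel_measurable borel"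
  shows "ennreal (h*L/4) \<le> (\<Sum>j\<le>2*q. L1_dist_T (box_fun h w (\<xi>0 + real j * (L/(2*q)) + s))
            (deeponet m p x \<beta> \<tau> (box_fun h w (\<xi>0 + real j * (L/(2*q))))))"
proof -
  define n where "n = 2*q"
  define \<delta> where "\<delta> = L / real n"
  have n0: "0 < n" using q unfolding n_def by simp
  have \<delta>0: "0 < \<delta>" unfolding \<delta>_def using n0 L by simp
  have n\<delta>: "real n * \<delta> = L" unfolding \<delta>_def using n0 by simp
  have q\<delta>: "real q * \<delta> = L/2" unfolding \<delta>_def n_def using q by simp
  have mono: "real a * \<delta> \<le> real b * \<delta>" if "a \<le> b" for a b
    using that \<delta>0 by (intro mult_right_mono) auto
  have pos: "0 \<le> real a * \<delta>" for a using \<delta>0 by simp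
  define G where "G j y = box_fun h w (\<xi>0 + real j * \<delta> + s) y" for j y
  define r where "r j = (\<lambda>i\<in>{..<m}. box_fun h w (\<xi>0 + real j * \<delta>) (x i))" for j
  define N where "N j y = (\<Sum>k<p. \<beta> k (r j) * \<tau> k y)" for j y
  define e where "e j y = (G (Suc j) y - N (Suc j) y) - (G j y - N j y)" for j y
  define err where "err j = (\<integral>\<^sup>+ y. ennreal (indicator {0..<2*pi} y * \<bar>e j y\<bar>) \<partial>lborel)" for j
  define E where "E j = (\<integral>\<^sup>+ y. ennreal (indicator {0..<2*pi} y * \<bar>G j y - N j y\<bar>) \<partial>lborel)" for j
  define Ls where "Ls j = {\<xi>0 + s - w/2 + real j * \<delta> ..< \<xi>0 + s - w/2 + real (Suc j) * \<delta>}" for j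
  have Nd: "N j = deeponet m p x \<beta> \<tau> (box_fun h w (\<xi>0 + real j * \<delta>))" for j
    unfolding N_def deeponet_def r_def by auto
  have Gm[measurable]: "G j \<in> borel_measurable borel" for j unfolding G_def by measurable
  have Nm[measurable]: "N j \<in> borel_measurable borel" for j
    unfolding N_def using \<tau>m by measurable
  have em[measurable]: "e j \<in> borel_measurable borel" for j unfolding e_def by measurable
  have Gval: "G i y = (if i \<le> j then h else 0)" if "j < n" "y \<in> Ls j" "i \<le> n" for i j y
  proof -
    define u where "u = y - (\<xi>0 + s - w/2)"
    have u: "real j * \<delta> \<le> u" "u < real (Suc j) * \<delta>" using that(2) unfolding Ls_def u_def by auto
    have yt: "y - (\<xi>0 + real i * \<delta> + s) = u - w/2 - real i * \<delta>" unfolding u_def by simp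
    have a1: "real i * \<delta> \<le> L" using mono[OF that(3)] n\<delta> by simp
    have a2: "real (Suc j) * \<delta> \<le> L" using mono[of "Suc j" n] that(1) n\<delta> by simp
    have pj: "0 \<le> real j * \<delta>" by (rule pos)
    have bw: "(\<exists>k::int. \<bar>y - (\<xi>0 + real i * \<delta> + s) - 2*pi*k\<bar> \<le> w/2) \<longleftrightarrow> \<bar>y - (\<xi>0 + real i * \<delta> + s)\<bar> \<le> w/2"
      by (rule box_window[of w L]) (use L u yt a1 a2 pj pos[of i] in auto)
    show ?thesis
    proof (cases "i \<le> j")
      case True
      have "real i * \<delta> \<le> real j * \<delta>" using mono[OF True] .
      then have "y - (\<xi>0 + real i * \<delta> + s) \<le> w/2" "- (y - (\<xi>0 + real i * \<delta> + s)) \<le> w/2"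
        using yt u a2 L pos[of i] by linarith+
      then have "\<bar>y - (\<xi>0 + real i * \<delta> + s)\<bar> \<le> w/2" by (rule abs_leI)
      then show ?thesis using bw True unfolding G_def box_fun_def by auto
    next
      case False
      have "real (Suc j) * \<delta> \<le> real i * \<delta>" using mono[of "Suc j" i] False by simp
      then have "- (y - (\<xi>0 + real i * \<delta> + s)) > w/2" using yt u L by linarith
      then have "\<not> \<bar>y - (\<xi>0 + real i * \<delta> + s)\<bar> \<le> w/2" using abs_ge_minus_self[of "y - (\<xi>0 + real i * \<delta> + s)"] by linarith
      then show ?thesis using bw False unfolding G_def box_fun_def by auto
    qed
  qed
  have Ls_sub: "Ls j \<subseteq> {0..<2*pi}" if "j < n" for j
  proof -
    have "real (Suc j) * \<delta> \<le> L" using mono[of "Suc j" n] that n\<delta> by simp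
    then show ?thesis using win pos[of j] unfolding Ls_def by auto
  qed
  have Ls_disj: "j = j'" if "y \<in> Ls j" "y \<in> Ls j'" for y j j'
  proof (rule ccontr)
    assume ne: "j \<noteq> j'"
    have "Suc j \<le> j' \<or> Suc j' \<le> j" using ne by auto
    then show False
      using mono[of "Suc j" j'] mono[of "Suc j'" j] that unfolding Ls_def by auto
  qed
  have Ls_meas: "emeasure lborel (Ls j) = ennreal \<delta>" for j
  proof -
    have "real j * \<delta> \<le> real (Suc j) * \<delta>" using mono[of j "Suc j"] by simp
    then show ?thesis unfolding Ls_def by (simp add: algebra_simps)
  qed
  \<comment> \<open>C1: lower bound from disjoint supports\<close>
  have C1: "ennreal (h * \<delta> * (\<Sum>j\<in>S. \<bar>c j\<bar>)) \<le>
      (\<integral>\<^sup>+ y. ennreal (indicator {0..<2*pi} y * \<bar>\<Sum>j\<in>S. c j * e j y\<bar>) \<partial>lborel)"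
    if S: "S \<subseteq> {..<n}" and hyp: "\<And>y. (\<Sum>j\<in>S. c j * (N (Suc j) y - N j y)) = 0" for S c
  proof -
    have fS: "finite S" using S finite_subset by blast
    have pw: "(\<Sum>j\<in>S. ennreal (h * \<bar>c j\<bar>) * indicator (Ls j) y)
        \<le> ennreal (indicator {0..<2*pi} y * \<bar>\<Sum>j\<in>S. c j * e j y\<bar>)" for y
    proof (cases "\<exists>j0<n. y \<in> Ls j0")
      case False
      then have "(\<Sum>j\<in>S. ennreal (h * \<bar>c j\<bar>) * indicator (Ls j) y) = 0"
        using S by (intro sum.neutral) (auto simp: indicator_def)
      then show ?thesis by simp
    next
      case True
      then obtain j0 where j0: "j0 < n" "y \<in> Ls j0" by blast
      have y02: "y \<in> {0..<2*pi}" using Ls_sub[OF j0(1)] j0(2) by auto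
      have ee: "(\<Sum>j\<in>S. c j * e j y) = (\<Sum>j\<in>S. c j * (G (Suc j) y - G j y))"
      proof -
        have "(\<Sum>j\<in>S. c j * e j y) = (\<Sum>j\<in>S. c j * (G (Suc j) y - G j y)) - (\<Sum>j\<in>S. c j * (N (Suc j) y - N j y))"
          unfolding e_def by (simp add: sum_subtractf[symmetric] algebra_simps)
        then show ?thesis using hyp by simp
      qed
      have gd: "G (Suc j) y - G j y = (if j = j0 then - h else 0)" if "j \<in> S" for j
      proof -
        have "j < n" using that S by auto
        then show ?thesis using Gval[OF j0, of "Suc j"] Gval[OF j0, of j] by auto
      qed
      have "(\<Sum>j\<in>S. c j * (G (Suc j) y - G j y)) = (\<Sum>j\<in>S. if j = j0 then - h * c j else 0)"
        using gd by (intro sum.cong) auto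
      also have "\<dots> = (if j0 \<in> S then - h * c j0 else 0)" using fS by (simp add: sum.delta)
      finally have R: "(\<Sum>j\<in>S. c j * e j y) = (if j0 \<in> S then - h * c j0 else 0)" using ee by simp
      have "(\<Sum>j\<in>S. ennreal (h * \<bar>c j\<bar>) * indicator (Ls j) y) = (\<Sum>j\<in>S. if j = j0 then ennreal (h * \<bar>c j\<bar>) else 0)"
        using Ls_disj j0 by (intro sum.cong) (auto simp: indicator_def)
      also have "\<dots> = (if j0 \<in> S then ennreal (h * \<bar>c j0\<bar>) else 0)" using fS by (simp add: sum.delta)
      finally show ?thesis using R y02 h by (simp add: abs_mult)
    qed
    have "(\<integral>\<^sup>+ y. (\<Sum>j\<in>S. ennreal (h * \<bar>c j\<bar>) * indicator (Ls j) y) \<partial>lborel)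
        = (\<Sum>j\<in>S. ennreal (h * \<bar>c j\<bar>) * ennreal \<delta>)"
    proof (subst nn_integral_sum)
      show "(\<lambda>y. ennreal (h * \<bar>c j\<bar>) * indicator (Ls j) y) \<in> borel_measurable lborel" for j
        unfolding Ls_def by measurable
      show "(\<Sum>j\<in>S. \<integral>\<^sup>+ y. ennreal (h * \<bar>c j\<bar>) * indicator (Ls j) y \<partial>lborel) = (\<Sum>j\<in>S. ennreal (h * \<bar>c j\<bar>) * ennreal \<delta>)"
      proof (intro sum.cong refl)
        fix j
        have "Ls j \<in> sets lborel" unfolding Ls_def by simp
        then show "(\<integral>\<^sup>+ y. ennreal (h * \<bar>c j\<bar>) * indicator (Ls j) y \<partial>lborel) = ennreal (h * \<bar>c j\<bar>) * ennreal \<delta>"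
          by (simp add: nn_integral_cmult_indicator Ls_meas)
      qed
    qed
    also have "\<dots> = ennreal (h * \<delta> * (\<Sum>j\<in>S. \<bar>c j\<bar>))"
      using h \<delta>0 by (simp add: ennreal_mult[symmetric] sum_distrib_left algebra_simps)
    finally have "ennreal (h * \<delta> * (\<Sum>j\<in>S. \<bar>c j\<bar>)) = (\<integral>\<^sup>+ y. (\<Sum>j\<in>S. ennreal (h * \<bar>c j\<bar>) * indicator (Ls j) y) \<partial>lborel)" ..
    also have "\<dots> \<le> (\<integral>\<^sup>+ y. ennreal (indicator {0..<2*pi} y * \<bar>\<Sum>j\<in>S. c j * e j y\<bar>) \<partial>lborel)"
      by (intro nn_integral_mono pw)
    finally show ?thesis .
  qed
  have C2: "(\<integral>\<^sup>+ y. ennreal (indicator {0..<2*pi} y * \<bar>\<Sum>j\<in>S. c j * e j y\<bar>) \<partial>lborel)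
      \<le> (\<Sum>j\<in>S. ennreal \<bar>c j\<bar> * err j)" for S c
  proof -
    have "(\<integral>\<^sup>+ y. ennreal (indicator {0..<2*pi} y * \<bar>\<Sum>j\<in>S. c j * e j y\<bar>) \<partial>lborel)
        \<le> (\<integral>\<^sup>+ y. (\<Sum>j\<in>S. ennreal \<bar>c j\<bar> * ennreal (indicator {0..<2*pi} y * \<bar>e j y\<bar>)) \<partial>lborel)"
    proof (intro nn_integral_mono)
      fix y
      have "indicator {0..<2*pi} y * \<bar>\<Sum>j\<in>S. c j * e j y\<bar> \<le> indicator {0..<2*pi} y * (\<Sum>j\<in>S. \<bar>c j * e j y\<bar>)"
        by (intro mult_left_mono) (auto simp: indicator_def)
      also have "\<dots> = (\<Sum>j\<in>S. \<bar>c j\<bar> * (indicator {0..<2*pi} y * \<bar>e j y\<bar>))"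
        by (simp add: sum_distrib_left abs_mult algebra_simps)
      finally have "ennreal (indicator {0..<2*pi} y * \<bar>\<Sum>j\<in>S. c j * e j y\<bar>)
          \<le> ennreal (\<Sum>j\<in>S. \<bar>c j\<bar> * (indicator {0..<2*pi} y * \<bar>e j y\<bar>))"
        by (rule ennreal_leI)
      also have "\<dots> = (\<Sum>j\<in>S. ennreal \<bar>c j\<bar> * ennreal (indicator {0..<2*pi} y * \<bar>e j y\<bar>))"
        by (subst sum_ennreal[symmetric]) (auto simp: ennreal_mult)
      finally show "ennreal (indicator {0..<2*pi} y * \<bar>\<Sum>j\<in>S. c j * e j y\<bar>)
          \<le> (\<Sum>j\<in>S. ennreal \<bar>c j\<bar> * ennreal (indicator {0..<2*pi} y * \<bar>e j y\<bar>))" .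
    qed
    also have "\<dots> = (\<Sum>j\<in>S. ennreal \<bar>c j\<bar> * err j)"
      unfolding err_def by (subst nn_integral_sum) (auto simp: nn_integral_cmult)
    finally show ?thesis .
  qed
  have C3: "err j \<le> E j + E (Suc j)" for j
  proof -
    have "err j \<le> (\<integral>\<^sup>+ y. ennreal (indicator {0..<2*pi} y * \<bar>G j y - N j y\<bar>) + ennreal (indicator {0..<2*pi} y * \<bar>G (Suc j) y - N (Suc j) y\<bar>) \<partial>lborel)"
      unfolding err_def
    proof (intro nn_integral_mono)
      fix y
      have tri: "indicator {0..<2*pi} y * \<bar>e j y\<bar> \<le> indicator {0..<2*pi} y * \<bar>G j y - N j y\<bar> + indicator {0..<2*pi} y * \<bar>G (Suc j) y - N (Suc j) y\<bar>"
        unfolding e_def by (auto simp: indicator_def)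
      show "ennreal (indicator {0..<2*pi} y * \<bar>e j y\<bar>) \<le> ennreal (indicator {0..<2*pi} y * \<bar>G j y - N j y\<bar>) + ennreal (indicator {0..<2*pi} y * \<bar>G (Suc j) y - N (Suc j) y\<bar>)"
      proof -
        have nn: "0 \<le> indicator {0..<2*pi} y * \<bar>G j y - N j y\<bar>" "0 \<le> indicator {0..<2*pi} y * \<bar>G (Suc j) y - N (Suc j) y\<bar>"
          by auto
        from ennreal_leI[OF tri] show ?thesis by (simp only: ennreal_plus[OF nn])
      qed
    qed
    also have "\<dots> = E j + E (Suc j)" unfolding E_def by (subst nn_integral_add) auto
    finally show ?thesis .
  qed
  define B where "B = {j. j < n \<and> err j < ennreal (h * \<delta>)}"
  have Bsub: "B \<subseteq> {..<n}" unfolding B_def by auto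
  have fB: "finite B" using Bsub finite_subset by blast
  have Bp: "card B \<le> p"
  proof (rule ccontr)
    assume "\<not> card B \<le> p"
    then have "p < card B" by simp
    from lin_dep[OF fB this, of "\<lambda>j k. \<beta> k (r (Suc j)) - \<beta> k (r j)"]
    obtain c where c: "\<exists>j\<in>B. c j \<noteq> 0" "\<forall>k<p. (\<Sum>j\<in>B. c j * (\<beta> k (r (Suc j)) - \<beta> k (r j))) = 0"
      by blast
    have hyp: "(\<Sum>j\<in>B. c j * (N (Suc j) y - N j y)) = 0" for y
    proof -
      have "(\<Sum>j\<in>B. c j * (N (Suc j) y - N j y)) = (\<Sum>j\<in>B. \<Sum>k<p. c j * (\<beta> k (r (Suc j)) - \<beta> k (r j)) * \<tau> k y)"
        unfolding N_def by (simp add: sum_subtractf[symmetric] sum_distrib_left algebra_simps)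
      also have "\<dots> = (\<Sum>k<p. (\<Sum>j\<in>B. c j * (\<beta> k (r (Suc j)) - \<beta> k (r j))) * \<tau> k y)"
        by (subst sum.swap) (simp add: sum_distrib_right)
      also have "\<dots> = 0" using c(2) by simp
      finally show ?thesis .
    qed
    have "ennreal (h * \<delta> * (\<Sum>j\<in>B. \<bar>c j\<bar>)) \<le> (\<Sum>j\<in>B. ennreal \<bar>c j\<bar> * err j)"
      using C1[OF Bsub hyp] C2[of c B] by (rule order.trans)
    also have "\<dots> = (\<Sum>j\<in>B. ennreal (\<bar>c j\<bar> * enn2real (err j)))"
    proof (intro sum.cong refl)
      fix j assume "j \<in> B"
      then have "err j < ennreal (h * \<delta>)" unfolding B_def by simp
      then have "err j < top" using order.strict_trans[OF _ ennreal_less_top] by blast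
      then have "err j = ennreal (enn2real (err j))" by simp
      then show "ennreal \<bar>c j\<bar> * err j = ennreal (\<bar>c j\<bar> * enn2real (err j))"
        by (metis abs_ge_zero ennreal_mult')
    qed
    also have "\<dots> = ennreal (\<Sum>j\<in>B. \<bar>c j\<bar> * enn2real (err j))" by simp
    finally have le: "h * \<delta> * (\<Sum>j\<in>B. \<bar>c j\<bar>) \<le> (\<Sum>j\<in>B. \<bar>c j\<bar> * enn2real (err j))"
      by (subst (asm) ennreal_le_iff) (auto intro!: sum_nonneg)
    have lt: "enn2real (err j) < h * \<delta>" if "j \<in> B" for j
    proof -
      have "err j < ennreal (h * \<delta>)" using that unfolding B_def by auto
      moreover have "err j < top" using order.strict_trans[OF calculation ennreal_less_top] .
      ultimately show ?thesis by simp
    qed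
    have "(\<Sum>j\<in>B. \<bar>c j\<bar> * enn2real (err j)) < (\<Sum>j\<in>B. \<bar>c j\<bar> * (h * \<delta>))"
    proof (rule sum_strict_mono_ex1[OF fB])
      show "\<forall>j\<in>B. \<bar>c j\<bar> * enn2real (err j) \<le> \<bar>c j\<bar> * (h * \<delta>)"
      proof
        fix j assume "j \<in> B"
        then show "\<bar>c j\<bar> * enn2real (err j) \<le> \<bar>c j\<bar> * (h * \<delta>)"
          using lt[of j] by (intro mult_left_mono) auto
      qed
      show "\<exists>j\<in>B. \<bar>c j\<bar> * enn2real (err j) < \<bar>c j\<bar> * (h * \<delta>)"
      proof -
        obtain j where j: "j \<in> B" "c j \<noteq> 0" using c(1) by blast
        then have "\<bar>c j\<bar> * enn2real (err j) < \<bar>c j\<bar> * (h * \<delta>)"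
          using lt[OF j(1)] by (intro mult_strict_left_mono) auto
        then show ?thesis using j(1) by blast
      qed
    qed
    then show False using le by (simp add: sum_distrib_left algebra_simps)
  qed
  have Bchange: "r j \<noteq> r (Suc j)" if "j \<in> B" for j
  proof
    assume eq: "r j = r (Suc j)"
    have "j < n" "err j < ennreal (h * \<delta>)" using that unfolding B_def by auto
    have "\<And>y. (\<Sum>i\<in>{j}. 1 * (N (Suc i) y - N i y)) = 0" unfolding N_def using eq by simp
    from C1[of "{j}" "\<lambda>_. 1", OF _ this] \<open>j < n\<close>
    have "ennreal (h * \<delta>) \<le> err j" unfolding err_def by simp
    then show False using \<open>err j < ennreal (h * \<delta>)\<close> by simp
  qed
  define J where "J i = {j. j < n \<and> (\<exists>k::int. \<bar>x i - (\<xi>0 + real j * \<delta>) - 2*pi*k\<bar> \<le> w/2)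
                    \<noteq> (\<exists>k::int. \<bar>x i - (\<xi>0 + real (Suc j) * \<delta>) - 2*pi*k\<bar> \<le> w/2)}" for i
  have Jc: "card (J i) \<le> 1" for i
    unfolding J_def by (rule change_count) (use \<delta>0 n\<delta> L in auto)
  have BJ: "B \<subseteq> (\<Union>i<m. J i)"
  proof
    fix j assume jB: "j \<in> B"
    then have jn: "j < n" unfolding B_def by auto
    from Bchange[OF jB] obtain i where i: "i < m"
      "box_fun h w (\<xi>0 + real j * \<delta>) (x i) \<noteq> box_fun h w (\<xi>0 + real (Suc j) * \<delta>) (x i)"
      unfolding r_def by (auto simp: fun_eq_iff split: if_splits)
    then have "j \<in> J i" using jn unfolding J_def box_fun_def by (auto split: if_splits)
    then show "j \<in> (\<Union>i<m. J i)" using i by auto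
  qed
  have Bm: "card B \<le> m"
  proof -
    have fJ: "finite (J i)" for i unfolding J_def by auto
    have "card B \<le> card (\<Union>i<m. J i)" using BJ fJ by (intro card_mono) auto
    also have "\<dots> \<le> (\<Sum>i<m. card (J i))" by (rule card_UN_le) simp
    also have "\<dots> \<le> (\<Sum>i<m. 1)" using Jc by (intro sum_mono) auto
    finally show ?thesis by simp
  qed
  have Bq: "card B \<le> q" using Bp Bm q by simp
  have cardc: "q \<le> card ({..<n} - B)"
  proof -
    have "card ({..<n} - B) = n - card B" using Bsub fB by (simp add: card_Diff_subset)
    then show ?thesis using Bq unfolding n_def by simp
  qed
  have hq: "h * L / 2 = real q * (h * \<delta>)"
  proof -
    have "real q * (h * \<delta>) = h * (real q * \<delta>)" by (simp add: algebra_simps)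
    also have "\<dots> = h * L / 2" using q\<delta> by simp
    finally show ?thesis by (simp only: eq_commute)
  qed
  have "ennreal (h * L / 2) = of_nat q * ennreal (h * \<delta>)"
    unfolding hq using h \<delta>0 by (simp add: ennreal_of_nat_eq_real_of_nat ennreal_mult)
  also have "\<dots> \<le> of_nat (card ({..<n} - B)) * ennreal (h * \<delta>)"
    using cardc by (intro mult_right_mono) auto
  also have "\<dots> = (\<Sum>j\<in>{..<n} - B. ennreal (h * \<delta>))" by simp
  also have "\<dots> \<le> (\<Sum>j\<in>{..<n} - B. err j)"
    by (intro sum_mono) (auto simp: B_def not_less)
  also have "\<dots> \<le> (\<Sum>j<n. err j)" by (intro sum_mono2) auto
  also have "\<dots> \<le> (\<Sum>j<n. E j + E (Suc j))" by (intro sum_mono C3)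
  also have "\<dots> = (\<Sum>j<n. E j) + (\<Sum>j<n. E (Suc j))" by (simp add: sum.distrib)
  also have "\<dots> \<le> (\<Sum>j\<le>n. E j) + (\<Sum>j\<le>n. E j)"
  proof (intro add_mono)
    show "(\<Sum>j<n. E j) \<le> (\<Sum>j\<le>n. E j)" by (intro sum_mono2) auto
    have "(\<Sum>j<n. E (Suc j)) = (\<Sum>j\<in>Suc ` {..<n}. E j)" by (simp add: sum.reindex)
    also have "\<dots> \<le> (\<Sum>j\<le>n. E j)" by (intro sum_mono2) auto
    finally show "(\<Sum>j<n. E (Suc j)) \<le> (\<Sum>j\<le>n. E j)" .
  qed
  finally have main: "ennreal (h * L / 2) \<le> (\<Sum>j\<le>n. E j) + (\<Sum>j\<le>n. E j)" .
  have fin: "ennreal (h * L / 4) \<le> (\<Sum>j\<le>n. E j)"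
  proof (cases "(\<Sum>j\<le>n. E j) = top")
    case True then show ?thesis by (simp only: top_greatest)
  next
    case False
    then obtain X where X: "(\<Sum>j\<le>n. E j) = ennreal X" "0 \<le> X" by (cases "\<Sum>j\<le>n. E j") auto
    have "ennreal (h * L / 2) \<le> ennreal (X + X)" using main unfolding X(1) ennreal_plus[OF X(2) X(2), symmetric] by blast
    then have "h * L / 2 \<le> X + X" using X by (subst (asm) ennreal_le_iff) auto
    then show ?thesis using X by simp
  qed
  have "E j = L1_dist_T (box_fun h w (\<xi>0 + real j * (L/(2*q)) + s))
            (deeponet m p x \<beta> \<tau> (box_fun h w (\<xi>0 + real j * (L/(2*q)))))" for j
    unfolding E_def L1_dist_T_def Nd G_def[abs_def] \<delta>_def n_def by simp
  then show ?thesis using fin unfolding n_def by simp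
qed


lemma F_meas:
  fixes \<beta> :: "nat \<Rightarrow> (nat \<Rightarrow> real) \<Rightarrow> real"
  assumes "\<And>k. k<p \<Longrightarrow> \<beta> k \<in> borel_measurable (PiM {..<m} (\<lambda>_. lborel))"
    and "\<And>k. k<p \<Longrightarrow> \<tau> k \<in> borel_measurable lborel"
  shows "(\<lambda>(h,w,\<xi>). L1_dist_T (G_adv a T (box_fun h w \<xi>)) (deeponet m p x \<beta> \<tau> (box_fun h w \<xi>)))
     \<in> borel_measurable (borel \<Otimes>\<^sub>M (borel \<Otimes>\<^sub>M borel))"
proof -
  have [measurable]: "\<tau> k \<in> borel_measurable borel" if "k<p" for k
    using assms(2)[OF that] by simp
  have m1: "(\<lambda>z::real\<times>real\<times>real. \<lambda>i\<in>{..<m}. box_fun (fst z) (fst (snd z)) (snd (snd z)) (x i))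
     \<in> measurable (borel \<Otimes>\<^sub>M (borel \<Otimes>\<^sub>M borel)) (PiM {..<m} (\<lambda>_. lborel))"
    by (rule measurable_restrict) (simp add: measurable_lborel2)
  have m2[measurable]: "(\<lambda>z. \<beta> k (\<lambda>i\<in>{..<m}. box_fun (fst z) (fst (snd z)) (snd (snd z)) (x i)))
     \<in> borel_measurable (borel \<Otimes>\<^sub>M (borel \<Otimes>\<^sub>M borel))" if "k<p" for k
    using measurable_comp[OF m1 assms(1)[OF that]] by (simp add: o_def)
  have "(\<lambda>(z,y). ennreal (indicator {0..<2 * pi} y * \<bar>G_adv a T (box_fun (fst z) (fst (snd z)) (snd (snd z))) y - deeponet m p x \<beta> \<tau> (box_fun (fst z) (fst (snd z)) (snd (snd z))) y\<bar>))
     \<in> borel_measurable ((borel \<Otimes>\<^sub>M (borel \<Otimes>\<^sub>M borel)) \<Otimes>\<^sub>M lborel)"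
    unfolding G_adv_def deeponet_def by measurable
  from lborel.borel_measurable_nn_integral[OF this] show ?thesis
    unfolding L1_dist_T_def by (simp add: case_prod_beta')
qed

lemma box_shift: "box_fun h w \<xi> (y - c) = box_fun h w (\<xi> + c) y"
  unfolding box_fun_def by (simp add: algebra_simps)

lemma box_per: "box_fun h w (t + 2*pi*real_of_int k) = box_fun h w t"
proof
  fix y
  have "(\<exists>k'::int. \<bar>y - (t + 2*pi*real_of_int k) - 2*pi*k'\<bar> \<le> w/2) \<longleftrightarrow> (\<exists>k''::int. \<bar>y - t - 2*pi*k''\<bar> \<le> w/2)"
  proof
    assume "\<exists>k'::int. \<bar>y - (t + 2*pi*real_of_int k) - 2*pi*k'\<bar> \<le> w/2"
    then obtain k' :: int where "\<bar>y - (t + 2*pi*real_of_int k) - 2*pi*k'\<bar> \<le> w/2" by blast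
    then show "\<exists>k''::int. \<bar>y - t - 2*pi*k''\<bar> \<le> w/2"
      by (intro exI[of _ "k + k'"]) (simp add: algebra_simps)
  next
    assume "\<exists>k''::int. \<bar>y - t - 2*pi*k''\<bar> \<le> w/2"
    then obtain k'' :: int where "\<bar>y - t - 2*pi*k''\<bar> \<le> w/2" by blast
    then show "\<exists>k'::int. \<bar>y - (t + 2*pi*real_of_int k) - 2*pi*k'\<bar> \<le> w/2"
      by (intro exI[of _ "k'' - k"]) (simp add: algebra_simps)
  qed
  then show "box_fun h w (t + 2*pi*real_of_int k) y = box_fun h w t y"
    unfolding box_fun_def by simp
qed

lemma choose_sb:
  fixes r \<delta> L :: real
  assumes "0 < \<delta>" "0 < L" "2*L + 2*\<delta> \<le> 2*pi"
  shows "\<exists>\<sigma> b. (\<exists>k::int. \<sigma> = r + 2*pi*k) \<and> 0 \<le> b \<and> b + L + \<delta> \<le> 2*pi \<and> 0 \<le> b + \<sigma> \<and> b + \<delta> + \<sigma> + L \<le> 2*pi"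
proof -
  define vv where "vv = r / (2*pi)"
  define k0 where "k0 = \<lfloor>vv\<rfloor>"
  have k0: "real_of_int k0 \<le> vv" "vv < real_of_int k0 + 1" unfolding k0_def by linarith+
  have rv: "r = 2*pi * vv" unfolding vv_def by simp
  have a: "2*pi*real_of_int k0 \<le> r" unfolding rv using k0(1) by (intro mult_left_mono) auto
  have b: "r < 2*pi*(real_of_int k0 + 1)" unfolding rv using k0(2) by (intro mult_strict_left_mono) auto
  define u where "u = r - 2*pi*real_of_int k0"
  have u: "0 \<le> u" "u < 2*pi" using a b unfolding u_def by (auto simp: algebra_simps)
  show ?thesis
  proof (cases "u + \<delta> + L \<le> 2*pi")
    case True
    show ?thesis
      by (rule exI[of _ u], rule exI[of _ 0]) (use True u assms in \<open>auto simp: u_def intro!: exI[of _ "-k0"]\<close>)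
  next
    case False
    show ?thesis
      by (rule exI[of _ "u - 2*pi"], rule exI[of _ "2*pi - u"])
        (use False u assms in \<open>auto simp: u_def algebra_simps intro!: exI[of _ "-k0 - 1"]\<close>)
  qed
qed

lemma xi_bound:
  fixes h w L a T :: real and q m p :: nat and x :: "nat \<Rightarrow> real"
    and \<beta> :: "nat \<Rightarrow> (nat \<Rightarrow> real) \<Rightarrow> real" and \<tau> :: "nat \<Rightarrow> real \<Rightarrow> real"
  assumes h: "0 < h" and L: "0 < L" "L < w" "w + L < 2*pi" "3*L \<le> 2*pi"
    and q: "1 \<le> q" "q = min m p"
    and \<beta>m: "\<And>k. k<p \<Longrightarrow> \<beta> k \<in> borel_measurable (PiM {..<m} (\<lambda>_. lborel))"
    and \<tau>m: "\<And>k. k<p \<Longrightarrow> \<tau> k \<in> borel_measurable lborel"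
  shows "ennreal (h * L^2 / (16*pi*q)) \<le> (\<integral>\<^sup>+\<xi>. L1_dist_T (G_adv a T (box_fun h w \<xi>)) (deeponet m p x \<beta> \<tau> (box_fun h w \<xi>))
            \<partial>uniform_measure lborel {0..2*pi})"
proof -
  define n where "n = 2*q"
  define \<delta> where "\<delta> = L / (2*q)"
  have \<delta>0: "0 < \<delta>" unfolding \<delta>_def using q L by simp
  have \<delta>L: "\<delta> \<le> L/2" unfolding \<delta>_def using q L by (simp add: field_simps)
  have n\<delta>: "real n * \<delta> = L" unfolding \<delta>_def n_def using q by simp
  define F where "F \<xi> = L1_dist_T (G_adv a T (box_fun h w \<xi>)) (deeponet m p x \<beta> \<tau> (box_fun h w \<xi>))" for \<xi>
  have Fm[measurable]: "F \<in> borel_measurable borel"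
  proof -
    have "(\<lambda>\<xi>. (h, w, \<xi>)) \<in> measurable borel (borel \<Otimes>\<^sub>M (borel \<Otimes>\<^sub>M borel))" by measurable
    from measurable_comp[OF this F_meas[OF \<beta>m \<tau>m]] show ?thesis
      unfolding F_def by (simp add: o_def)
  qed
  obtain \<sigma> b where sb: "\<exists>k::int. \<sigma> = (a*T - w/2) + 2*pi*k" "0 \<le> b" "b + L + \<delta> \<le> 2*pi" "0 \<le> b + \<sigma>"
    "b + \<delta> + \<sigma> + L \<le> 2*pi"
    using choose_sb[OF \<delta>0 L(1), of "a*T - w/2"] \<delta>L L by auto
  obtain k :: int where k: "\<sigma> = (a*T - w/2) + 2*pi*k" using sb(1) by blast
  define s where "s = \<sigma> + w/2"
  have Fs: "F \<xi> = L1_dist_T (box_fun h w (\<xi> + s)) (deeponet m p x \<beta> \<tau> (box_fun h w \<xi>))" for \<xi>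
  proof -
    have "G_adv a T (box_fun h w \<xi>) = box_fun h w (\<xi> + a*T)"
      unfolding G_adv_def by (simp add: box_shift)
    also have "\<dots> = box_fun h w (\<xi> + a*T + 2*pi*real_of_int k)" by (rule box_per[symmetric])
    also have "\<xi> + a*T + 2*pi*real_of_int k = \<xi> + s" unfolding s_def k by simp
    finally show ?thesis unfolding F_def by simp
  qed
  have pt: "ennreal (h*L/4) \<le> (\<Sum>j\<le>n. F (\<xi>0 + real j * \<delta>))" if "b \<le> \<xi>0" "\<xi>0 \<le> b + \<delta>" for \<xi>0
  proof -
    have "ennreal (h*L/4) \<le> (\<Sum>j\<le>2*q. L1_dist_T (box_fun h w (\<xi>0 + real j * (L/(2*q)) + s))
            (deeponet m p x \<beta> \<tau> (box_fun h w (\<xi>0 + real j * (L/(2*q))))))"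
      by (rule core[OF h L(1,2,3) q]) (use that sb s_def \<tau>m in auto)
    then show ?thesis unfolding Fs n_def \<delta>_def .
  qed
  define I where "I j = {b + real j * \<delta> ..< b + real (Suc j) * \<delta>}" for j
  have split: "(\<integral>\<^sup>+ \<xi>. F \<xi> * indicator {b ..< b + real k' * \<delta>} \<xi> \<partial>lborel) = (\<Sum>j<k'. \<integral>\<^sup>+ \<xi>. F \<xi> * indicator (I j) \<xi> \<partial>lborel)" for k'
  proof (induction k')
    case 0
    then show ?case by simp
  next
    case (Suc k')
    have "indicator {b ..< b + real (Suc k') * \<delta>} \<xi> = (indicator {b ..< b + real k' * \<delta>} \<xi> + indicator (I k') \<xi> :: ennreal)" for \<xi>
    proof -
      have "real k' * \<delta> \<le> real (Suc k') * \<delta>" "0 \<le> real k' * \<delta>" using \<delta>0 by (auto intro: mult_right_mono)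
      then show ?thesis unfolding I_def by (auto simp: indicator_def)
    qed
    then have "(\<integral>\<^sup>+ \<xi>. F \<xi> * indicator {b ..< b + real (Suc k') * \<delta>} \<xi> \<partial>lborel)
        = (\<integral>\<^sup>+ \<xi>. F \<xi> * indicator {b ..< b + real k' * \<delta>} \<xi> + F \<xi> * indicator (I k') \<xi> \<partial>lborel)"
      by (simp add: distrib_left)
    also have "\<dots> = (\<integral>\<^sup>+ \<xi>. F \<xi> * indicator {b ..< b + real k' * \<delta>} \<xi> \<partial>lborel) + (\<integral>\<^sup>+ \<xi>. F \<xi> * indicator (I k') \<xi> \<partial>lborel)"
      unfolding I_def by (rule nn_integral_add) auto
    finally show ?case using Suc.IH by simp
  qed
  have shift: "(\<integral>\<^sup>+ \<xi>. F \<xi> * indicator (I j) \<xi> \<partial>lborel) = (\<integral>\<^sup>+ \<xi>0. F (\<xi>0 + real j * \<delta>) * indicator {b..<b+\<delta>} \<xi>0 \<partial>lborel)" for j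
  proof -
    have "(\<lambda>\<xi>. F \<xi> * indicator (I j) \<xi>) \<in> borel_measurable borel" unfolding I_def by measurable
    from nn_integral_real_affine[OF this, of 1 "real j * \<delta>"]
    have "(\<integral>\<^sup>+ \<xi>. F \<xi> * indicator (I j) \<xi> \<partial>lborel) = (\<integral>\<^sup>+ \<xi>0. F (real j * \<delta> + \<xi>0) * indicator (I j) (real j * \<delta> + \<xi>0) \<partial>lborel)"
      by simp
    also have "\<dots> = (\<integral>\<^sup>+ \<xi>0. F (\<xi>0 + real j * \<delta>) * indicator {b..<b+\<delta>} \<xi>0 \<partial>lborel)"
      by (intro nn_integral_cong) (auto simp: I_def indicator_def algebra_simps)
    finally show ?thesis .
  qed
  have "ennreal (h*L/4) * ennreal \<delta> = (\<integral>\<^sup>+ \<xi>0. ennreal (h*L/4) * indicator {b..<b+\<delta>} \<xi>0 \<partial>lborel)"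
    using \<delta>0 by (simp add: nn_integral_cmult_indicator)
  also have "\<dots> \<le> (\<integral>\<^sup>+ \<xi>0. (\<Sum>j\<le>n. F (\<xi>0 + real j * \<delta>)) * indicator {b..<b+\<delta>} \<xi>0 \<partial>lborel)"
    by (intro nn_integral_mono) (auto simp: indicator_def intro!: pt)
  also have "\<dots> = (\<Sum>j\<le>n. \<integral>\<^sup>+ \<xi>0. F (\<xi>0 + real j * \<delta>) * indicator {b..<b+\<delta>} \<xi>0 \<partial>lborel)"
    unfolding sum_distrib_right by (rule nn_integral_sum) measurable
  also have "\<dots> = (\<Sum>j<Suc n. \<integral>\<^sup>+ \<xi>. F \<xi> * indicator (I j) \<xi> \<partial>lborel)"
    by (simp add: shift lessThan_Suc_atMost)
  also have "\<dots> = (\<integral>\<^sup>+ \<xi>. F \<xi> * indicator {b ..< b + real (Suc n) * \<delta>} \<xi> \<partial>lborel)"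
    by (rule split[symmetric])
  also have "\<dots> \<le> (\<integral>\<^sup>+ \<xi>. F \<xi> * indicator {0..2*pi} \<xi> \<partial>lborel)"
  proof (intro nn_integral_mono)
    fix \<xi>
    have "real (Suc n) * \<delta> = L + \<delta>" using n\<delta> by (simp add: algebra_simps)
    then have "indicator {b ..< b + real (Suc n) * \<delta>} \<xi> \<le> (indicator {0..2*pi} \<xi> :: ennreal)"
      using sb(2,3) by (auto simp: indicator_def)
    then show "F \<xi> * indicator {b ..< b + real (Suc n) * \<delta>} \<xi> \<le> F \<xi> * indicator {0..2*pi} \<xi>"
      by (rule mult_left_mono) simp
  qed
  finally have A: "ennreal (h*L/4) * ennreal \<delta> \<le> (\<integral>\<^sup>+ \<xi>. F \<xi> * indicator {0..2*pi} \<xi> \<partial>lborel)" .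
  have U: "(\<integral>\<^sup>+\<xi>. F \<xi> \<partial>uniform_measure lborel {0..2*pi}) = (\<integral>\<^sup>+ \<xi>. F \<xi> * indicator {0..2*pi} \<xi> \<partial>lborel) / ennreal (2*pi)"
    by (subst nn_integral_uniform_measure) auto
  have "ennreal (h * L^2 / (16*pi*q)) = ennreal (h*L/4) * ennreal \<delta> / ennreal (2*pi)"
    using h L \<delta>0 q by (simp add: ennreal_mult[symmetric] divide_ennreal \<delta>_def power2_eq_square field_simps)
  also have "\<dots> \<le> (\<integral>\<^sup>+\<xi>. F \<xi> \<partial>uniform_measure lborel {0..2*pi})"
    unfolding U by (rule divide_right_mono_ennreal[OF A])
  finally show ?thesis unfolding F_def .
qed


lemma sets_unif: "sets (unif_real lo hi) = sets borel"
  by (simp add: unif_real_def)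

lemma prob_unif: "lo \<le> hi \<Longrightarrow> prob_space (unif_real lo hi)"
  by (auto simp: unif_real_def intro!: prob_space_uniform_measure prob_space_return)

lemma AE_unif:
  assumes "lo \<le> hi" shows "AE x in unif_real lo hi. x \<in> {lo..hi}"
proof (cases "lo < hi")
  case True
  have "AE x in uniform_measure lborel {lo..hi}. x \<in> {lo..hi}"
    by (rule AE_uniform_measureI) auto
  then show ?thesis using True unfolding unif_real_def by simp
next
  case False
  have pm: "Measurable.pred lborel (\<lambda>y. y \<in> {lo..hi})" by measurable
  have "AE x in return lborel lo. x \<in> {lo..hi}"
    using assms by (subst AE_return[OF _ pm]) auto
  then show ?thesis using False unfolding unif_real_def by simp
qed

theorem theorem3p1:
  fixes hl hu wl wu M :: real
  assumes "0 < hl" "hl \<le> hu" "0 < wl" "wl \<le> wu" "wu < 2 * pi" "0 < M"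
  shows "\<exists>C>0. \<forall>(a::real) (T::real) (m::nat) (p::nat) (x::nat \<Rightarrow> real)
            (\<beta>::nat \<Rightarrow> (nat \<Rightarrow> real) \<Rightarrow> real) (\<tau>::nat \<Rightarrow> real \<Rightarrow> real).
      0 < T \<longrightarrow>
      (\<forall>i<m. x i \<in> {0..<2 * pi}) \<longrightarrow>
      (\<forall>k<p. \<beta> k \<in> borel_measurable (PiM {..<m} (\<lambda>_. lborel))) \<longrightarrow>
      (\<forall>k<p. \<tau> k \<in> borel_measurable lborel \<and>
              integrable lborel (\<lambda>y. indicator {0..<2 * pi} y * (\<tau> k y)\<^sup>2)) \<longrightarrow>
      (\<forall>h\<in>{hl..hu}. \<forall>w\<in>{wl..wu}. \<forall>\<xi>\<in>{0..2 * pi}.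
         AE y in lborel. y \<in> {0..<2 * pi} \<longrightarrow>
           \<bar>deeponet m p x \<beta> \<tau> (box_fun h w \<xi>) y\<bar> \<le> M) \<longrightarrow>
      (\<integral>\<^sup>+ (h, w, \<xi>). L1_dist_T (G_adv a T (box_fun h w \<xi>))
                                 (deeponet m p x \<beta> \<tau> (box_fun h w \<xi>))
         \<partial>param_law hl hu wl wu)
        \<ge> ennreal (C / real (min m p))"
proof -
  define L where "L = min wl (2*pi - wu) / 2"
  have L0: "0 < L" using assms unfolding L_def by simp
  have Lw: "L < wl" using assms unfolding L_def by simp
  have Lw2: "L < 2*pi - wu" using assms unfolding L_def by simp
  have L3: "3*L \<le> 2*pi"
  proof -
    have "min wl (2*pi - wu) \<le> (wl + (2*pi - wu)) / 2"
      by (auto simp: min_def field_simps)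
    then show ?thesis using assms unfolding L_def by simp
  qed
  define C where "C = hl * L^2 / (16*pi)"
  have C0: "0 < C" unfolding C_def using assms L0 by simp
  show ?thesis
  proof (intro exI[of _ C] conjI C0 allI impI)
    fix a T :: real and m p :: nat and x :: "nat \<Rightarrow> real"
      and \<beta> :: "nat \<Rightarrow> (nat \<Rightarrow> real) \<Rightarrow> real" and \<tau> :: "nat \<Rightarrow> real \<Rightarrow> real"
    assume \<beta>m: "\<forall>k<p. \<beta> k \<in> borel_measurable (PiM {..<m} (\<lambda>_. lborel))"
      and \<tau>m': "\<forall>k<p. \<tau> k \<in> borel_measurable lborel \<and>
              integrable lborel (\<lambda>y. indicator {0..<2 * pi} y * (\<tau> k y)\<^sup>2)"
    have \<tau>m: "\<tau> k \<in> borel_measurable lborel" if "k < p" for k using \<tau>m' that by blast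
    define F where "F = (\<lambda>(h,w,\<xi>). L1_dist_T (G_adv a T (box_fun h w \<xi>))
                                 (deeponet m p x \<beta> \<tau> (box_fun h w \<xi>)))"
    show "(\<integral>\<^sup>+ (h, w, \<xi>). L1_dist_T (G_adv a T (box_fun h w \<xi>))
                                 (deeponet m p x \<beta> \<tau> (box_fun h w \<xi>))
         \<partial>param_law hl hu wl wu) \<ge> ennreal (C / real (min m p))"
    proof (cases "min m p = 0")
      case True
      then show ?thesis by simp
    next
      case False
      define q where "q = min m p"
      have q1: "1 \<le> q" using False unfolding q_def by simp
      define H where "H = unif_real hl hu"
      define W where "W = unif_real wl wu"
      define X where "X = unif_real 0 (2*pi)"
      have X: "X = uniform_measure lborel {0..2*pi}" unfolding X_def unif_real_def by simp
      have pH: "prob_space H" unfolding H_def using assms by (intro prob_unif) simp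
      have pW: "prob_space W" unfolding W_def using assms by (intro prob_unif) simp
      have pX: "prob_space X" unfolding X_def by (intro prob_unif) simp
      have pWX: "prob_space (W \<Otimes>\<^sub>M X)" by (rule prob_space_pair[OF pW pX])
      have Fm0: "F \<in> borel_measurable (borel \<Otimes>\<^sub>M (borel \<Otimes>\<^sub>M borel))"
        unfolding F_def by (rule F_meas) (use \<beta>m \<tau>m in auto)
      have sets_eq: "sets (H \<Otimes>\<^sub>M (W \<Otimes>\<^sub>M X)) = sets (borel \<Otimes>\<^sub>M (borel \<Otimes>\<^sub>M borel))"
        unfolding H_def W_def X_def by (intro sets_pair_measure_cong sets_unif)
      have sets_eq2: "sets (W \<Otimes>\<^sub>M X) = sets (borel \<Otimes>\<^sub>M borel)"
        unfolding W_def X_def by (intro sets_pair_measure_cong sets_unif)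
      have Fm: "F \<in> borel_measurable (H \<Otimes>\<^sub>M (W \<Otimes>\<^sub>M X))"
        by (subst measurable_cong_sets[OF sets_eq refl]) (rule Fm0)
      define K where "K = ennreal (C / real q)"
      have inner: "K \<le> (\<integral>\<^sup>+ \<xi>. F (h, w, \<xi>) \<partial>X)" if "h \<in> {hl..hu}" "w \<in> {wl..wu}" for h w
      proof -
        have "K = ennreal (hl * L^2 / (16*pi*q))" unfolding K_def C_def by (simp add: field_simps)
        also have "\<dots> \<le> ennreal (h * L^2 / (16*pi*q))"
          using that q1 by (intro ennreal_leI divide_right_mono mult_right_mono) auto
        also have "\<dots> \<le> (\<integral>\<^sup>+ \<xi>. F (h, w, \<xi>) \<partial>X)"
          unfolding X F_def
          by (simp, rule xi_bound[OF _ L0 _ _ L3 q1 q_def]) (use that assms Lw Lw2 \<beta>m \<tau>m in auto)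
        finally show ?thesis .
      qed
      have mid: "K \<le> (\<integral>\<^sup>+ wx. F (h, wx) \<partial>(W \<Otimes>\<^sub>M X))" if "h \<in> {hl..hu}" for h
      proof -
        have Fh: "(\<lambda>wx. F (h, wx)) \<in> borel_measurable (W \<Otimes>\<^sub>M X)"
          by (rule measurable_compose_Pair1[OF _ Fm]) (simp add: H_def unif_real_def)
        have "K = (\<integral>\<^sup>+ w. K \<partial>W)" using prob_space.emeasure_space_1[OF pW] by simp
        also have "\<dots> \<le> (\<integral>\<^sup>+ w. \<integral>\<^sup>+ \<xi>. F (h, w, \<xi>) \<partial>X \<partial>W)"
          using AE_unif[of wl wu] assms unfolding W_def[symmetric]
          by (intro nn_integral_mono_AE) (auto elim!: AE_mp intro!: inner that)
        also have "\<dots> = (\<integral>\<^sup>+ wx. F (h, wx) \<partial>(W \<Otimes>\<^sub>M X))"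
          using sigma_finite_measure.nn_integral_fst[OF prob_space_imp_sigma_finite[OF pX] Fh] by simp
        finally show ?thesis .
      qed
      have "K = (\<integral>\<^sup>+ h. K \<partial>H)" using prob_space.emeasure_space_1[OF pH] by simp
      also have "\<dots> \<le> (\<integral>\<^sup>+ h. \<integral>\<^sup>+ wx. F (h, wx) \<partial>(W \<Otimes>\<^sub>M X) \<partial>H)"
        using AE_unif[of hl hu] assms unfolding H_def[symmetric]
        by (intro nn_integral_mono_AE) (auto elim!: AE_mp intro!: mid)
      also have "\<dots> = integral\<^sup>N (H \<Otimes>\<^sub>M (W \<Otimes>\<^sub>M X)) F"
        by (rule sigma_finite_measure.nn_integral_fst[OF prob_space_imp_sigma_finite[OF pWX] Fm])
      finally show ?thesis
        unfolding K_def q_def F_def param_law_def H_def W_def X_def by simp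
    qed
  qed
qed

end
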